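(* Let $D$ be a division ring, $A$ a finitely generated free abelian group and $D * A$ a crossed product. Let $N$ be a finitely generated critical $D * A$-module such that $\mathrm{gk}(N)\le \mathrm{gk}(L)$ for every nonzero finitely generated $D * A$-module $L$. Then $N$ is simple.
   Context: A crossed product $D * A$ of an abelian group $A$ over a division ring $D$ is a ring with a $D$-basis $\{\bar a: a\in A\}$ with $\bar a_1\bar a_2=\tau(a_1,a_2)\overline{a_1a_2}$ ($\tau(a_1,a_2)\in D\setminus\{0\}$) and $\bar a d=\sigma_a(d)\bar a$ for automorphisms $\sigma_a$ of $D$. $\mathrm{gk}$ denotes Gelfand–Kirillov dimension measured over $D$. A nonzero $D * A$-module $M$ is critical if for every nonzero proper submodule $N'$ of $M$ one has $\mathrm{gk}(M)>\mathrm{gk}(M/N')$. *)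

theory Defs
  imports Complex_Main "HOL-Algebra.Module" "HOL-Algebra.AbelCoset" "HOL-Algebra.Subrings"
    "HOL-Library.Extended_Real" "HOL-Library.Liminf_Limsup"
begin

(* The finitely generated free abelian group of rank n, realised as Z^n:
   integer vectors indexed by {0..<n} (entries outside are 0), group law = pointwise addition. *)
definition Zn :: "nat \<Rightarrow> (nat \<Rightarrow> int) set" where
  "Zn n = {a. \<forall>i\<ge>n. a i = 0}"

definition Zadd :: "(nat \<Rightarrow> int) \<Rightarrow> (nat \<Rightarrow> int) \<Rightarrow> (nat \<Rightarrow> int)" where
  "Zadd a b = (\<lambda>i. a i + b i)"

definition division_subring :: "('r, 'b) ring_scheme \<Rightarrow> 'r set \<Rightarrow> bool" where
  "division_subring R D \<longleftrightarrow> subring D R \<and> \<one>\<^bsub>R\<^esub> \<noteq> \<zero>\<^bsub>R\<^esub> \<and>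
     (\<forall>d\<in>D. d \<noteq> \<zero>\<^bsub>R\<^esub> \<longrightarrow> (\<exists>e\<in>D. d \<otimes>\<^bsub>R\<^esub> e = \<one>\<^bsub>R\<^esub> \<and> e \<otimes>\<^bsub>R\<^esub> d = \<one>\<^bsub>R\<^esub>))"

definition ring_aut_on :: "('r, 'b) ring_scheme \<Rightarrow> 'r set \<Rightarrow> ('r \<Rightarrow> 'r) \<Rightarrow> bool" where
  "ring_aut_on R D \<sigma> \<longleftrightarrow> bij_betw \<sigma> D D \<and> \<sigma> \<one>\<^bsub>R\<^esub> = \<one>\<^bsub>R\<^esub> \<and>
     (\<forall>x\<in>D. \<forall>y\<in>D. \<sigma> (x \<oplus>\<^bsub>R\<^esub> y) = \<sigma> x \<oplus>\<^bsub>R\<^esub> \<sigma> y \<and>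
                     \<sigma> (x \<otimes>\<^bsub>R\<^esub> y) = \<sigma> x \<otimes>\<^bsub>R\<^esub> \<sigma> y)"

(* R is a crossed product D * A of A = Z^n over the division ring D (a subring of R),
   with distinguished elements u a (= \bar a), a \<in> A, forming a left D-basis of R. *)
definition crossed_product ::
  "('r, 'b) ring_scheme \<Rightarrow> 'r set \<Rightarrow> nat \<Rightarrow> ((nat \<Rightarrow> int) \<Rightarrow> 'r) \<Rightarrow> bool" where
  "crossed_product R D n u \<longleftrightarrow>
     ring R \<and> division_subring R D \<and>
     (\<forall>a\<in>Zn n. u a \<in> carrier R) \<and>
     (\<forall>r\<in>carrier R. \<exists>!c. (\<forall>a. a \<notin> Zn n \<longrightarrow> c a = \<zero>\<^bsub>R\<^esub>) \<and> (\<forall>a\<in>Zn n. c a \<in> D) \<and>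
         finite {a\<in>Zn n. c a \<noteq> \<zero>\<^bsub>R\<^esub>} \<and>
         r = finsum R (\<lambda>a. c a \<otimes>\<^bsub>R\<^esub> u a) {a\<in>Zn n. c a \<noteq> \<zero>\<^bsub>R\<^esub>}) \<and>
     (\<forall>a\<in>Zn n. \<forall>b\<in>Zn n. \<exists>t\<in>D - {\<zero>\<^bsub>R\<^esub>}. u a \<otimes>\<^bsub>R\<^esub> u b = t \<otimes>\<^bsub>R\<^esub> u (Zadd a b)) \<and>
     (\<forall>a\<in>Zn n. \<exists>\<sigma>. ring_aut_on R D \<sigma> \<and> (\<forall>d\<in>D. u a \<otimes>\<^bsub>R\<^esub> d = \<sigma> d \<otimes>\<^bsub>R\<^esub> u a))"

(* unital left modules over a (not necessarily commutative) ring R *)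
definition lmodule :: "('r, 'b) ring_scheme \<Rightarrow> ('r, 'm, 'c) module_scheme \<Rightarrow> bool" where
  "lmodule R M \<longleftrightarrow> ring R \<and> abelian_group M \<and>
     (\<forall>a\<in>carrier R. \<forall>x\<in>carrier M. a \<odot>\<^bsub>M\<^esub> x \<in> carrier M) \<and>
     (\<forall>a\<in>carrier R. \<forall>b\<in>carrier R. \<forall>x\<in>carrier M.
        (a \<oplus>\<^bsub>R\<^esub> b) \<odot>\<^bsub>M\<^esub> x = a \<odot>\<^bsub>M\<^esub> x \<oplus>\<^bsub>M\<^esub> b \<odot>\<^bsub>M\<^esub> x) \<and>
     (\<forall>a\<in>carrier R. \<forall>x\<in>carrier M. \<forall>y\<in>carrier M.
        a \<odot>\<^bsub>M\<^esub> (x \<oplus>\<^bsub>M\<^esub> y) = a \<odot>\<^bsub>M\<^esub> x \<oplus>\<^bsub>M\<^esub> a \<odot>\<^bsub>M\<^esub> y) \<and>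
     (\<forall>a\<in>carrier R. \<forall>b\<in>carrier R. \<forall>x\<in>carrier M.
        (a \<otimes>\<^bsub>R\<^esub> b) \<odot>\<^bsub>M\<^esub> x = a \<odot>\<^bsub>M\<^esub> (b \<odot>\<^bsub>M\<^esub> x)) \<and>
     (\<forall>x\<in>carrier M. \<one>\<^bsub>R\<^esub> \<odot>\<^bsub>M\<^esub> x = x)"

definition lsubmodule :: "('r, 'b) ring_scheme \<Rightarrow> ('r, 'm, 'c) module_scheme \<Rightarrow> 'm set \<Rightarrow> bool" where
  "lsubmodule R M N \<longleftrightarrow> N \<subseteq> carrier M \<and> \<zero>\<^bsub>M\<^esub> \<in> N \<and>
     (\<forall>x\<in>N. \<forall>y\<in>N. x \<oplus>\<^bsub>M\<^esub> y \<in> N) \<and>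
     (\<forall>a\<in>carrier R. \<forall>x\<in>N. a \<odot>\<^bsub>M\<^esub> x \<in> N)"

definition lfin_gen :: "('r, 'b) ring_scheme \<Rightarrow> ('r, 'm, 'c) module_scheme \<Rightarrow> bool" where
  "lfin_gen R M \<longleftrightarrow> (\<exists>F. finite F \<and> F \<subseteq> carrier M \<and>
     carrier M = {finsum M (\<lambda>f. c f \<odot>\<^bsub>M\<^esub> f) F | c. c \<in> F \<rightarrow> carrier R})"

definition qmod :: "('r, 'm, 'c) module_scheme \<Rightarrow> 'm set \<Rightarrow> ('r, 'm set) module" where
  "qmod M N = \<lparr>carrier = a_rcosets\<^bsub>M\<^esub> N, mult = (\<lambda>X Y. undefined), one = undefined,
     zero = N, add = (\<lambda>X Y. X <+>\<^bsub>M\<^esub> Y),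
     smult = (\<lambda>r X. N <+>\<^bsub>M\<^esub> ((\<lambda>x. r \<odot>\<^bsub>M\<^esub> x) ` X))\<rparr>"

definition lsimple :: "('r, 'b) ring_scheme \<Rightarrow> ('r, 'm, 'c) module_scheme \<Rightarrow> bool" where
  "lsimple R M \<longleftrightarrow> carrier M \<noteq> {\<zero>\<^bsub>M\<^esub>} \<and>
     (\<forall>N. lsubmodule R M N \<longrightarrow> N = {\<zero>\<^bsub>M\<^esub>} \<or> N = carrier M)"

definition Dspan :: "('r, 'm, 'c) module_scheme \<Rightarrow> 'r set \<Rightarrow> 'm set \<Rightarrow> 'm set" where
  "Dspan M D G = {finsum M (\<lambda>g. c g \<odot>\<^bsub>M\<^esub> g) G | c. c \<in> G \<rightarrow> D}"

(* dim_D of the D-span of S = least size of a subset of S spanning S *)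
definition Ddim :: "('r, 'm, 'c) module_scheme \<Rightarrow> 'r set \<Rightarrow> 'm set \<Rightarrow> nat" where
  "Ddim M D S = (LEAST k. \<exists>G. finite G \<and> G \<subseteq> S \<and> card G = k \<and> S \<subseteq> Dspan M D G)"

definition Zball :: "nat \<Rightarrow> nat \<Rightarrow> (nat \<Rightarrow> int) set" where
  "Zball n k = {a \<in> Zn n. (\<Sum>i<n. \<bar>a i\<bar>) \<le> int k}"

(* V^k F, V = D-span of {\bar a : |a| <= 1} the standard frame *)
definition Vset :: "('r, 'm, 'c) module_scheme \<Rightarrow> nat \<Rightarrow> ((nat \<Rightarrow> int) \<Rightarrow> 'r) \<Rightarrow> nat \<Rightarrow> 'm set \<Rightarrow> 'm set" where
  "Vset M n u k F = {u a \<odot>\<^bsub>M\<^esub> f | a f. a \<in> Zball n k \<and> f \<in> F}"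

(* Gelfand-Kirillov dimension over D (supremum over finite subsets; equals the
   growth of any finite generating set for finitely generated modules; -\<infinity> for 0) *)
definition gk :: "'r set \<Rightarrow> nat \<Rightarrow> ((nat \<Rightarrow> int) \<Rightarrow> 'r) \<Rightarrow> ('r, 'm, 'c) module_scheme \<Rightarrow> ereal" where
  "gk D n u M = (SUP F \<in> {F. finite F \<and> F \<noteq> {} \<and> F \<subseteq> carrier M - {\<zero>\<^bsub>M\<^esub>}}.
      limsup (\<lambda>k. ereal (ln (real (Ddim M D (Vset M n u k F))) / ln (real k))))"

definition lcritical :: "('r, 'b) ring_scheme \<Rightarrow> 'r set \<Rightarrow> nat \<Rightarrow> ((nat \<Rightarrow> int) \<Rightarrow> 'r)
     \<Rightarrow> ('r, 'm, 'c) module_scheme \<Rightarrow> bool" where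
  "lcritical R D n u M \<longleftrightarrow> carrier M \<noteq> {\<zero>\<^bsub>M\<^esub>} \<and>
     (\<forall>N'. lsubmodule R M N' \<and> N' \<noteq> {\<zero>\<^bsub>M\<^esub>} \<and> N' \<noteq> carrier M \<longrightarrow>
        gk D n u (qmod M N') < gk D n u M)"

end

theory Submission
  imports Defs
begin

context
  fixes R :: "('r,'b) ring_scheme" and M :: "('r,'m,'c) module_scheme"
  assumes lm: "lmodule R M"
begin

lemma lm_ring: "ring R" using lm by (simp add: lmodule_def)
lemma lm_ag: "abelian_group M" using lm by (simp add: lmodule_def)
lemma lm_closed: "a \<in> carrier R \<Longrightarrow> x \<in> carrier M \<Longrightarrow> a \<odot>\<^bsub>M\<^esub> x \<in> carrier M"
  using lm by (simp add: lmodule_def)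
lemma lm_distr1: "a \<in> carrier R \<Longrightarrow> b \<in> carrier R \<Longrightarrow> x \<in> carrier M \<Longrightarrow>
   (a \<oplus>\<^bsub>R\<^esub> b) \<odot>\<^bsub>M\<^esub> x = a \<odot>\<^bsub>M\<^esub> x \<oplus>\<^bsub>M\<^esub> b \<odot>\<^bsub>M\<^esub> x"
  using lm by (simp add: lmodule_def)
lemma lm_distr2: "a \<in> carrier R \<Longrightarrow> x \<in> carrier M \<Longrightarrow> y \<in> carrier M \<Longrightarrow>
   a \<odot>\<^bsub>M\<^esub> (x \<oplus>\<^bsub>M\<^esub> y) = a \<odot>\<^bsub>M\<^esub> x \<oplus>\<^bsub>M\<^esub> a \<odot>\<^bsub>M\<^esub> y"
  using lm by (simp add: lmodule_def)
lemma lm_assoc: "a \<in> carrier R \<Longrightarrow> b \<in> carrier R \<Longrightarrow> x \<in> carrier M \<Longrightarrow>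
   (a \<otimes>\<^bsub>R\<^esub> b) \<odot>\<^bsub>M\<^esub> x = a \<odot>\<^bsub>M\<^esub> (b \<odot>\<^bsub>M\<^esub> x)"
  using lm by (simp add: lmodule_def)
lemma lm_one: "x \<in> carrier M \<Longrightarrow> \<one>\<^bsub>R\<^esub> \<odot>\<^bsub>M\<^esub> x = x"
  using lm by (simp add: lmodule_def)

lemma lm_zero_smult: assumes "x \<in> carrier M" shows "\<zero>\<^bsub>R\<^esub> \<odot>\<^bsub>M\<^esub> x = \<zero>\<^bsub>M\<^esub>"
proof -
  interpret R: ring R by (rule lm_ring)
  interpret M: abelian_group M by (rule lm_ag)
  have c: "\<zero>\<^bsub>R\<^esub> \<odot>\<^bsub>M\<^esub> x \<in> carrier M" using lm_closed assms by simp
  have "\<zero>\<^bsub>R\<^esub> \<odot>\<^bsub>M\<^esub> x = (\<zero>\<^bsub>R\<^esub> \<oplus>\<^bsub>R\<^esub> \<zero>\<^bsub>R\<^esub>) \<odot>\<^bsub>M\<^esub> x" by simp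
  also have "\<dots> = \<zero>\<^bsub>R\<^esub> \<odot>\<^bsub>M\<^esub> x \<oplus>\<^bsub>M\<^esub> \<zero>\<^bsub>R\<^esub> \<odot>\<^bsub>M\<^esub> x"
    by (rule lm_distr1) (simp_all add: assms)
  finally have "\<zero>\<^bsub>R\<^esub> \<odot>\<^bsub>M\<^esub> x \<oplus>\<^bsub>M\<^esub> \<zero>\<^bsub>R\<^esub> \<odot>\<^bsub>M\<^esub> x = \<zero>\<^bsub>R\<^esub> \<odot>\<^bsub>M\<^esub> x \<oplus>\<^bsub>M\<^esub> \<zero>\<^bsub>M\<^esub>"
    using c by simp
  then show ?thesis using c by simp
qed

lemma lm_neg_smult: assumes "x \<in> carrier M" shows "(\<ominus>\<^bsub>R\<^esub> \<one>\<^bsub>R\<^esub>) \<odot>\<^bsub>M\<^esub> x = \<ominus>\<^bsub>M\<^esub> x"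
proof -
  interpret R: ring R by (rule lm_ring)
  interpret M: abelian_group M by (rule lm_ag)
  have c: "(\<ominus>\<^bsub>R\<^esub> \<one>\<^bsub>R\<^esub>) \<odot>\<^bsub>M\<^esub> x \<in> carrier M" using lm_closed assms by simp
  have "x \<oplus>\<^bsub>M\<^esub> (\<ominus>\<^bsub>R\<^esub> \<one>\<^bsub>R\<^esub>) \<odot>\<^bsub>M\<^esub> x = (\<one>\<^bsub>R\<^esub> \<oplus>\<^bsub>R\<^esub> \<ominus>\<^bsub>R\<^esub> \<one>\<^bsub>R\<^esub>) \<odot>\<^bsub>M\<^esub> x"
    using lm_distr1 lm_one assms by simp
  also have "\<dots> = \<zero>\<^bsub>M\<^esub>" using lm_zero_smult assms by (simp add: R.r_neg)
  finally show ?thesis using c assms M.minus_equality M.add.m_comm by metis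
qed

lemma sub_asg: assumes "lsubmodule R M H" shows "abelian_subgroup H M"
proof -
  interpret R: ring R by (rule lm_ring)
  interpret M: abelian_group M by (rule lm_ag)
  have "additive_subgroup H M"
  proof (rule additive_subgroup.intro, rule subgroup.intro)
    show "H \<subseteq> carrier (add_monoid M)" using assms by (simp add: lsubmodule_def)
    show "\<And>x y. x \<in> H \<Longrightarrow> y \<in> H \<Longrightarrow> x \<otimes>\<^bsub>add_monoid M\<^esub> y \<in> H" using assms by (simp add: lsubmodule_def)
    show "\<one>\<^bsub>add_monoid M\<^esub> \<in> H" using assms by (simp add: lsubmodule_def)
    fix x assume x: "x \<in> H"
    then have "x \<in> carrier M" using assms by (auto simp: lsubmodule_def)
    then have "inv\<^bsub>add_monoid M\<^esub> x = (\<ominus>\<^bsub>R\<^esub> \<one>\<^bsub>R\<^esub>) \<odot>\<^bsub>M\<^esub> x"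
      using lm_neg_smult by (simp add: a_inv_def)
    then show "inv\<^bsub>add_monoid M\<^esub> x \<in> H" using assms x by (simp add: lsubmodule_def)
  qed
  then show ?thesis using abelian_subgroupI3 lm_ag by blast
qed

context
  fixes H assumes sub: "lsubmodule R M H"
begin

interpretation H: abelian_subgroup H M by (rule sub_asg[OF sub])

lemma H_sub: "H \<subseteq> carrier M" using sub by (simp add: lsubmodule_def)

lemma zH: "\<zero>\<^bsub>M\<^esub> \<in> H" using sub by (simp add: lsubmodule_def)

lemma q_carrier: "carrier (qmod M H) = a_rcosets\<^bsub>M\<^esub> H" by (simp add: qmod_def)
lemma q_zero0: "\<zero>\<^bsub>qmod M H\<^esub> = H" by (simp add: qmod_def)

lemma cos_in: "x \<in> carrier M \<Longrightarrow> H +>\<^bsub>M\<^esub> x \<in> carrier (qmod M H)"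
  by (auto simp: qmod_def A_RCOSETS_def')

lemma cos_obtain: "X \<in> carrier (qmod M H) \<Longrightarrow> \<exists>x\<in>carrier M. X = H +>\<^bsub>M\<^esub> x"
  by (auto simp: qmod_def A_RCOSETS_def')

lemma q_add: "x \<in> carrier M \<Longrightarrow> y \<in> carrier M \<Longrightarrow>
   (H +>\<^bsub>M\<^esub> x) \<oplus>\<^bsub>qmod M H\<^esub> (H +>\<^bsub>M\<^esub> y) = H +>\<^bsub>M\<^esub> (x \<oplus>\<^bsub>M\<^esub> y)"
  by (simp add: qmod_def H.a_rcos_sum)

lemma q_zero: "\<zero>\<^bsub>qmod M H\<^esub> = H +>\<^bsub>M\<^esub> \<zero>\<^bsub>M\<^esub>"
  by (simp add: qmod_def H.a_rcos_const zH)

lemma q_smult: assumes r: "r \<in> carrier R" and x: "x \<in> carrier M"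
  shows "r \<odot>\<^bsub>qmod M H\<^esub> (H +>\<^bsub>M\<^esub> x) = H +>\<^bsub>M\<^esub> (r \<odot>\<^bsub>M\<^esub> x)"
proof -
  interpret M: abelian_group M by (rule lm_ag)
  have "H <+>\<^bsub>M\<^esub> ((\<lambda>y. r \<odot>\<^bsub>M\<^esub> y) ` (H +>\<^bsub>M\<^esub> x)) = H +>\<^bsub>M\<^esub> (r \<odot>\<^bsub>M\<^esub> x)"
  proof
    show "H <+>\<^bsub>M\<^esub> ((\<lambda>y. r \<odot>\<^bsub>M\<^esub> y) ` (H +>\<^bsub>M\<^esub> x)) \<subseteq> H +>\<^bsub>M\<^esub> (r \<odot>\<^bsub>M\<^esub> x)"
    proof
      fix z assume "z \<in> H <+>\<^bsub>M\<^esub> ((\<lambda>y. r \<odot>\<^bsub>M\<^esub> y) ` (H +>\<^bsub>M\<^esub> x))"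
      then obtain h k where h1: "h \<in> H" and k: "k \<in> (\<lambda>y. r \<odot>\<^bsub>M\<^esub> y) ` (H +>\<^bsub>M\<^esub> x)"
          and zk: "z = h \<oplus>\<^bsub>M\<^esub> k"
        unfolding set_add_def' by auto
      from k obtain y where y: "y \<in> H +>\<^bsub>M\<^esub> x" and ky: "k = r \<odot>\<^bsub>M\<^esub> y" by auto
      from y obtain h' where h2: "h' \<in> H" and yh: "y = h' \<oplus>\<^bsub>M\<^esub> x" unfolding a_r_coset_def' by auto
      have h: "h \<in> H" "h' \<in> H" using h1 h2 by auto
      have z: "z = h \<oplus>\<^bsub>M\<^esub> (r \<odot>\<^bsub>M\<^esub> (h' \<oplus>\<^bsub>M\<^esub> x))" using zk ky yh by simp
      have hc: "h \<in> carrier M" "h' \<in> carrier M" using h H_sub by auto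
      have rh: "r \<odot>\<^bsub>M\<^esub> h' \<in> H" using sub r h by (simp add: lsubmodule_def)
      have z2: "z = (h \<oplus>\<^bsub>M\<^esub> r \<odot>\<^bsub>M\<^esub> h') \<oplus>\<^bsub>M\<^esub> r \<odot>\<^bsub>M\<^esub> x"
      proof -
        have "z = h \<oplus>\<^bsub>M\<^esub> (r \<odot>\<^bsub>M\<^esub> h' \<oplus>\<^bsub>M\<^esub> r \<odot>\<^bsub>M\<^esub> x)"
          using z lm_distr2[OF r hc(2) x] by simp
        then show ?thesis using H.a_assoc[OF hc(1) lm_closed[OF r hc(2)] lm_closed[OF r x]] by simp
      qed
      have "h \<oplus>\<^bsub>M\<^esub> r \<odot>\<^bsub>M\<^esub> h' \<in> H" using sub h rh by (simp add: lsubmodule_def)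
      then show "z \<in> H +>\<^bsub>M\<^esub> (r \<odot>\<^bsub>M\<^esub> x)" unfolding a_r_coset_def'
        by (rule UN_I) (simp add: z2)
    qed
    show "H +>\<^bsub>M\<^esub> (r \<odot>\<^bsub>M\<^esub> x) \<subseteq> H <+>\<^bsub>M\<^esub> ((\<lambda>y. r \<odot>\<^bsub>M\<^esub> y) ` (H +>\<^bsub>M\<^esub> x))"
    proof
      fix z assume "z \<in> H +>\<^bsub>M\<^esub> (r \<odot>\<^bsub>M\<^esub> x)"
      then obtain h where h: "h \<in> H" and z: "z = h \<oplus>\<^bsub>M\<^esub> r \<odot>\<^bsub>M\<^esub> x"
        unfolding a_r_coset_def' by auto
      have w: "\<zero>\<^bsub>M\<^esub> \<oplus>\<^bsub>M\<^esub> x \<in> H +>\<^bsub>M\<^esub> x" unfolding a_r_coset_def'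
        by (rule UN_I[OF zH]) simp
      have w2: "r \<odot>\<^bsub>M\<^esub> x \<in> (\<lambda>y. r \<odot>\<^bsub>M\<^esub> y) ` (H +>\<^bsub>M\<^esub> x)"
        by (rule image_eqI[OF _ w]) (simp add: x)
      show "z \<in> H <+>\<^bsub>M\<^esub> ((\<lambda>y. r \<odot>\<^bsub>M\<^esub> y) ` (H +>\<^bsub>M\<^esub> x))"
        unfolding set_add_def' by (rule UN_I[OF h], rule UN_I[OF w2]) (simp add: z)
    qed
  qed
  then show ?thesis by (simp add: qmod_def)
qed

lemma q_add_closed: "X \<in> carrier (qmod M H) \<Longrightarrow> Y \<in> carrier (qmod M H) \<Longrightarrow> X \<oplus>\<^bsub>qmod M H\<^esub> Y \<in> carrier (qmod M H)"
proof -
  assume "X \<in> carrier (qmod M H)" "Y \<in> carrier (qmod M H)"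
  then obtain x y where xy: "x \<in> carrier M" "y \<in> carrier M" "X = H +>\<^bsub>M\<^esub> x" "Y = H +>\<^bsub>M\<^esub> y"
    using cos_obtain by metis
  have "X \<oplus>\<^bsub>qmod M H\<^esub> Y = H +>\<^bsub>M\<^esub> (x \<oplus>\<^bsub>M\<^esub> y)" using xy q_add by simp
  then show ?thesis using cos_in xy by simp
qed

lemma q_add_comm: "X \<in> carrier (qmod M H) \<Longrightarrow> Y \<in> carrier (qmod M H) \<Longrightarrow> X \<oplus>\<^bsub>qmod M H\<^esub> Y = Y \<oplus>\<^bsub>qmod M H\<^esub> X"
proof -
  assume "X \<in> carrier (qmod M H)" "Y \<in> carrier (qmod M H)"
  then obtain x y where xy: "x \<in> carrier M" "y \<in> carrier M" "X = H +>\<^bsub>M\<^esub> x" "Y = H +>\<^bsub>M\<^esub> y"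
    using cos_obtain by metis
  have "X \<oplus>\<^bsub>qmod M H\<^esub> Y = H +>\<^bsub>M\<^esub> (x \<oplus>\<^bsub>M\<^esub> y)" using xy q_add by simp
  also have "\<dots> = H +>\<^bsub>M\<^esub> (y \<oplus>\<^bsub>M\<^esub> x)" using xy H.a_comm by simp
  also have "\<dots> = Y \<oplus>\<^bsub>qmod M H\<^esub> X" using xy q_add by simp
  finally show ?thesis .
qed

lemma q_add_assoc: "X \<in> carrier (qmod M H) \<Longrightarrow> Y \<in> carrier (qmod M H) \<Longrightarrow> Z \<in> carrier (qmod M H) \<Longrightarrow>
  X \<oplus>\<^bsub>qmod M H\<^esub> Y \<oplus>\<^bsub>qmod M H\<^esub> Z = X \<oplus>\<^bsub>qmod M H\<^esub> (Y \<oplus>\<^bsub>qmod M H\<^esub> Z)"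
proof -
  assume "X \<in> carrier (qmod M H)" "Y \<in> carrier (qmod M H)" "Z \<in> carrier (qmod M H)"
  then obtain x y z where xy: "x \<in> carrier M" "y \<in> carrier M" "z \<in> carrier M"
      "X = H +>\<^bsub>M\<^esub> x" "Y = H +>\<^bsub>M\<^esub> y" "Z = H +>\<^bsub>M\<^esub> z"
    using cos_obtain by metis
  have "X \<oplus>\<^bsub>qmod M H\<^esub> Y \<oplus>\<^bsub>qmod M H\<^esub> Z = H +>\<^bsub>M\<^esub> (x \<oplus>\<^bsub>M\<^esub> y \<oplus>\<^bsub>M\<^esub> z)"
    using xy q_add by simp
  also have "\<dots> = H +>\<^bsub>M\<^esub> (x \<oplus>\<^bsub>M\<^esub> (y \<oplus>\<^bsub>M\<^esub> z))" using xy H.a_assoc by simp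
  also have "\<dots> = X \<oplus>\<^bsub>qmod M H\<^esub> (Y \<oplus>\<^bsub>qmod M H\<^esub> Z)" using xy q_add by simp
  finally show ?thesis .
qed

lemma q_zero_closed: "\<zero>\<^bsub>qmod M H\<^esub> \<in> carrier (qmod M H)"
  using q_zero cos_in H.zero_closed by simp

lemma q_l_zero: "X \<in> carrier (qmod M H) \<Longrightarrow> \<zero>\<^bsub>qmod M H\<^esub> \<oplus>\<^bsub>qmod M H\<^esub> X = X"
proof -
  assume "X \<in> carrier (qmod M H)"
  then obtain x where x: "x \<in> carrier M" "X = H +>\<^bsub>M\<^esub> x" using cos_obtain by blast
  have "\<zero>\<^bsub>qmod M H\<^esub> \<oplus>\<^bsub>qmod M H\<^esub> X = H +>\<^bsub>M\<^esub> (\<zero>\<^bsub>M\<^esub> \<oplus>\<^bsub>M\<^esub> x)"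
    using x q_zero q_add H.zero_closed by simp
  then show ?thesis using x by simp
qed

lemma q_inv: "X \<in> carrier (qmod M H) \<Longrightarrow> \<exists>Y\<in>carrier (qmod M H). Y \<oplus>\<^bsub>qmod M H\<^esub> X = \<zero>\<^bsub>qmod M H\<^esub>"
proof -
  assume "X \<in> carrier (qmod M H)"
  then obtain x where x: "x \<in> carrier M" "X = H +>\<^bsub>M\<^esub> x" using cos_obtain by blast
  have "(H +>\<^bsub>M\<^esub> (\<ominus>\<^bsub>M\<^esub> x)) \<oplus>\<^bsub>qmod M H\<^esub> X = H +>\<^bsub>M\<^esub> (\<ominus>\<^bsub>M\<^esub> x \<oplus>\<^bsub>M\<^esub> x)"
    using x q_add by simp
  also have "\<dots> = \<zero>\<^bsub>qmod M H\<^esub>" using x q_zero H.l_neg by simp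
  finally show ?thesis using x cos_in by (metis H.a_inv_closed)
qed

lemma q_ag: "abelian_group (qmod M H)"
  by (rule abelian_groupI) (fact q_add_closed q_zero_closed q_add_assoc q_add_comm q_l_zero q_inv)+

lemma q_distr1: "a \<in> carrier R \<Longrightarrow> b \<in> carrier R \<Longrightarrow> X \<in> carrier (qmod M H) \<Longrightarrow>
   (a \<oplus>\<^bsub>R\<^esub> b) \<odot>\<^bsub>qmod M H\<^esub> X = a \<odot>\<^bsub>qmod M H\<^esub> X \<oplus>\<^bsub>qmod M H\<^esub> b \<odot>\<^bsub>qmod M H\<^esub> X"
proof -
  interpret R: ring R by (rule lm_ring)
  assume ab: "a \<in> carrier R" "b \<in> carrier R" and "X \<in> carrier (qmod M H)"
  then obtain x where x: "x \<in> carrier M" "X = H +>\<^bsub>M\<^esub> x" using cos_obtain by blast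
  have ab2: "a \<oplus>\<^bsub>R\<^esub> b \<in> carrier R" using ab by simp
  show ?thesis
    unfolding x(2) q_smult[OF ab2 x(1)] q_smult[OF ab(1) x(1)] q_smult[OF ab(2) x(1)]
      q_add[OF lm_closed[OF ab(1) x(1)] lm_closed[OF ab(2) x(1)]] lm_distr1[OF ab x(1)] ..
qed

lemma q_assoc: "a \<in> carrier R \<Longrightarrow> b \<in> carrier R \<Longrightarrow> X \<in> carrier (qmod M H) \<Longrightarrow>
   (a \<otimes>\<^bsub>R\<^esub> b) \<odot>\<^bsub>qmod M H\<^esub> X = a \<odot>\<^bsub>qmod M H\<^esub> (b \<odot>\<^bsub>qmod M H\<^esub> X)"
proof -
  interpret R: ring R by (rule lm_ring)
  assume ab: "a \<in> carrier R" "b \<in> carrier R" and "X \<in> carrier (qmod M H)"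
  then obtain x where x: "x \<in> carrier M" "X = H +>\<^bsub>M\<^esub> x" using cos_obtain by blast
  have ab2: "a \<otimes>\<^bsub>R\<^esub> b \<in> carrier R" using ab by simp
  show ?thesis
    unfolding x(2) q_smult[OF ab2 x(1)] q_smult[OF ab(2) x(1)] q_smult[OF ab(1) lm_closed[OF ab(2) x(1)]]
      lm_assoc[OF ab x(1)] ..
qed

lemma q_distr2: "a \<in> carrier R \<Longrightarrow> X \<in> carrier (qmod M H) \<Longrightarrow> Y \<in> carrier (qmod M H) \<Longrightarrow>
   a \<odot>\<^bsub>qmod M H\<^esub> (X \<oplus>\<^bsub>qmod M H\<^esub> Y) = a \<odot>\<^bsub>qmod M H\<^esub> X \<oplus>\<^bsub>qmod M H\<^esub> a \<odot>\<^bsub>qmod M H\<^esub> Y"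
proof -
  assume a: "a \<in> carrier R" and "X \<in> carrier (qmod M H)" "Y \<in> carrier (qmod M H)"
  then obtain x y where x: "x \<in> carrier M" "y \<in> carrier M" "X = H +>\<^bsub>M\<^esub> x" "Y = H +>\<^bsub>M\<^esub> y"
    using cos_obtain by metis
  have xy: "x \<oplus>\<^bsub>M\<^esub> y \<in> carrier M" using x H.add.m_closed by simp
  show ?thesis
    unfolding x(3,4) q_add[OF x(1,2)] q_smult[OF a xy] q_smult[OF a x(1)] q_smult[OF a x(2)]
      q_add[OF lm_closed[OF a x(1)] lm_closed[OF a x(2)]] lm_distr2[OF a x(1,2)] ..
qed

lemma q_one: "X \<in> carrier (qmod M H) \<Longrightarrow> \<one>\<^bsub>R\<^esub> \<odot>\<^bsub>qmod M H\<^esub> X = X"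
proof -
  interpret R: ring R by (rule lm_ring)
  assume "X \<in> carrier (qmod M H)"
  then obtain x where x: "x \<in> carrier M" "X = H +>\<^bsub>M\<^esub> x" using cos_obtain by blast
  show ?thesis unfolding x(2) q_smult[OF R.one_closed x(1)] lm_one[OF x(1)] ..
qed

lemma q_closed: "a \<in> carrier R \<Longrightarrow> X \<in> carrier (qmod M H) \<Longrightarrow> a \<odot>\<^bsub>qmod M H\<^esub> X \<in> carrier (qmod M H)"
proof -
  assume a: "a \<in> carrier R" and "X \<in> carrier (qmod M H)"
  then obtain x where x: "x \<in> carrier M" "X = H +>\<^bsub>M\<^esub> x" using cos_obtain by blast
  show ?thesis unfolding x(2) q_smult[OF a x(1)] by (rule cos_in[OF lm_closed[OF a x(1)]])
qed

lemma q_lm: "lmodule R (qmod M H)"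
  unfolding lmodule_def
  apply (intro conjI ballI lm_ring q_ag)
  apply (erule (1) q_closed)
  apply (erule (2) q_distr1)
  apply (erule (2) q_distr2)
  apply (erule (2) q_assoc)
  apply (erule q_one)
  done

end
end


context
  fixes R :: "('r,'b) ring_scheme" and M :: "('r,'m,'c) module_scheme"
  assumes lm: "lmodule R M"
begin

interpretation R: ring R by (rule lm_ring[OF lm])
interpretation M: abelian_group M by (rule lm_ag[OF lm])

lemma lm_smult_zero: assumes r: "r \<in> carrier R" shows "r \<odot>\<^bsub>M\<^esub> \<zero>\<^bsub>M\<^esub> = \<zero>\<^bsub>M\<^esub>"
proof -
  have c: "r \<odot>\<^bsub>M\<^esub> \<zero>\<^bsub>M\<^esub> \<in> carrier M" using lm_closed[OF lm r M.zero_closed] .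
  have "r \<odot>\<^bsub>M\<^esub> \<zero>\<^bsub>M\<^esub> = r \<odot>\<^bsub>M\<^esub> (\<zero>\<^bsub>M\<^esub> \<oplus>\<^bsub>M\<^esub> \<zero>\<^bsub>M\<^esub>)" by simp
  also have "\<dots> = r \<odot>\<^bsub>M\<^esub> \<zero>\<^bsub>M\<^esub> \<oplus>\<^bsub>M\<^esub> r \<odot>\<^bsub>M\<^esub> \<zero>\<^bsub>M\<^esub>"
    by (rule lm_distr2[OF lm r M.zero_closed M.zero_closed])
  finally have "r \<odot>\<^bsub>M\<^esub> \<zero>\<^bsub>M\<^esub> \<oplus>\<^bsub>M\<^esub> r \<odot>\<^bsub>M\<^esub> \<zero>\<^bsub>M\<^esub> = r \<odot>\<^bsub>M\<^esub> \<zero>\<^bsub>M\<^esub> \<oplus>\<^bsub>M\<^esub> \<zero>\<^bsub>M\<^esub>"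
    using c by simp
  then show ?thesis using c by simp
qed

lemma smult_finsum:
  assumes fin: "finite G" and r: "r \<in> carrier R" and f: "f \<in> G \<rightarrow> carrier M"
  shows "r \<odot>\<^bsub>M\<^esub> finsum M f G = finsum M (\<lambda>g. r \<odot>\<^bsub>M\<^esub> f g) G"
  using fin f
proof (induction G rule: finite_induct)
  case empty
  then show ?case using lm_smult_zero[OF r] by simp
next
  case (insert a F)
  have fa: "f a \<in> carrier M" and fF: "f \<in> F \<rightarrow> carrier M" using insert.prems by auto
  have rf: "(\<lambda>g. r \<odot>\<^bsub>M\<^esub> f g) \<in> insert a F \<rightarrow> carrier M"
    using insert.prems lm_closed[OF lm r] by auto
  have "r \<odot>\<^bsub>M\<^esub> finsum M f (insert a F) = r \<odot>\<^bsub>M\<^esub> (f a \<oplus>\<^bsub>M\<^esub> finsum M f F)"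
    using M.finsum_insert[OF insert.hyps(1,2) fF fa] by simp
  also have "\<dots> = r \<odot>\<^bsub>M\<^esub> f a \<oplus>\<^bsub>M\<^esub> r \<odot>\<^bsub>M\<^esub> finsum M f F"
    using lm_distr2[OF lm r fa M.finsum_closed[OF fF]] .
  also have "\<dots> = r \<odot>\<^bsub>M\<^esub> f a \<oplus>\<^bsub>M\<^esub> finsum M (\<lambda>g. r \<odot>\<^bsub>M\<^esub> f g) F"
    using insert.IH[OF fF] by simp
  also have "\<dots> = finsum M (\<lambda>g. r \<odot>\<^bsub>M\<^esub> f g) (insert a F)"
    using M.finsum_insert[OF insert.hyps(1,2), of "\<lambda>g. r \<odot>\<^bsub>M\<^esub> f g"] rf by auto
  finally show ?case .
qed

lemma span_sub: assumes "G \<subseteq> carrier M" and "C \<subseteq> carrier R"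
  shows "Dspan M C G \<subseteq> carrier M"
proof
  fix v assume "v \<in> Dspan M C G"
  then obtain c where c: "c \<in> G \<rightarrow> C" and v: "v = finsum M (\<lambda>g. c g \<odot>\<^bsub>M\<^esub> g) G"
    unfolding Dspan_def by blast
  have "(\<lambda>g. c g \<odot>\<^bsub>M\<^esub> g) \<in> G \<rightarrow> carrier M"
    using c assms lm_closed[OF lm] by blast
  then show "v \<in> carrier M" using v M.finsum_closed by simp
qed

lemma span_add: assumes G: "finite G" "G \<subseteq> carrier M"
  and u: "u \<in> Dspan M (carrier R) G" and v: "v \<in> Dspan M (carrier R) G"
  shows "u \<oplus>\<^bsub>M\<^esub> v \<in> Dspan M (carrier R) G"
proof -
  obtain c where c: "c \<in> G \<rightarrow> carrier R" and cu: "u = finsum M (\<lambda>g. c g \<odot>\<^bsub>M\<^esub> g) G"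
    using u unfolding Dspan_def by blast
  obtain d where d: "d \<in> G \<rightarrow> carrier R" and dv: "v = finsum M (\<lambda>g. d g \<odot>\<^bsub>M\<^esub> g) G"
    using v unfolding Dspan_def by blast
  have f1: "(\<lambda>g. c g \<odot>\<^bsub>M\<^esub> g) \<in> G \<rightarrow> carrier M" using c G lm_closed[OF lm] by blast
  have f2: "(\<lambda>g. d g \<odot>\<^bsub>M\<^esub> g) \<in> G \<rightarrow> carrier M" using d G lm_closed[OF lm] by blast
  have "u \<oplus>\<^bsub>M\<^esub> v = finsum M (\<lambda>g. c g \<odot>\<^bsub>M\<^esub> g \<oplus>\<^bsub>M\<^esub> d g \<odot>\<^bsub>M\<^esub> g) G"
    using M.finsum_addf[OF f1 f2] cu dv by simp
  also have "\<dots> = finsum M (\<lambda>g. (c g \<oplus>\<^bsub>R\<^esub> d g) \<odot>\<^bsub>M\<^esub> g) G"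
  proof (rule M.finsum_cong')
    show "(\<lambda>g. (c g \<oplus>\<^bsub>R\<^esub> d g) \<odot>\<^bsub>M\<^esub> g) \<in> G \<rightarrow> carrier M"
      using c d G lm_closed[OF lm] by blast
    fix g assume g: "g \<in> G"
    have cg: "c g \<in> carrier R" "d g \<in> carrier R" "g \<in> carrier M" using g c d G by auto
    show "c g \<odot>\<^bsub>M\<^esub> g \<oplus>\<^bsub>M\<^esub> d g \<odot>\<^bsub>M\<^esub> g = (c g \<oplus>\<^bsub>R\<^esub> d g) \<odot>\<^bsub>M\<^esub> g"
      using lm_distr1[OF lm cg] by simp
  qed simp
  finally show ?thesis unfolding Dspan_def using c d by force
qed

lemma span_smult: assumes G: "finite G" "G \<subseteq> carrier M" and r: "r \<in> carrier R"
  and u: "u \<in> Dspan M (carrier R) G"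
  shows "r \<odot>\<^bsub>M\<^esub> u \<in> Dspan M (carrier R) G"
proof -
  obtain c where c: "c \<in> G \<rightarrow> carrier R" and cu: "u = finsum M (\<lambda>g. c g \<odot>\<^bsub>M\<^esub> g) G"
    using u unfolding Dspan_def by blast
  have f1: "(\<lambda>g. c g \<odot>\<^bsub>M\<^esub> g) \<in> G \<rightarrow> carrier M" using c G lm_closed[OF lm] by blast
  have "r \<odot>\<^bsub>M\<^esub> u = finsum M (\<lambda>g. r \<odot>\<^bsub>M\<^esub> (c g \<odot>\<^bsub>M\<^esub> g)) G"
    using smult_finsum[OF G(1) r f1] cu by simp
  also have "\<dots> = finsum M (\<lambda>g. (r \<otimes>\<^bsub>R\<^esub> c g) \<odot>\<^bsub>M\<^esub> g) G"
  proof (rule M.finsum_cong')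
    show "(\<lambda>g. (r \<otimes>\<^bsub>R\<^esub> c g) \<odot>\<^bsub>M\<^esub> g) \<in> G \<rightarrow> carrier M"
      using c r G lm_closed[OF lm] by blast
    fix g assume g: "g \<in> G"
    have cg: "c g \<in> carrier R" "g \<in> carrier M" using g c G by auto
    show "r \<odot>\<^bsub>M\<^esub> (c g \<odot>\<^bsub>M\<^esub> g) = (r \<otimes>\<^bsub>R\<^esub> c g) \<odot>\<^bsub>M\<^esub> g"
      using lm_assoc[OF lm r cg] by simp
  qed simp
  finally show ?thesis unfolding Dspan_def using c r by force
qed

lemma span_zero: assumes G: "finite G" "G \<subseteq> carrier M"
  shows "\<zero>\<^bsub>M\<^esub> \<in> Dspan M (carrier R) G"
proof -
  have "finsum M (\<lambda>g. \<zero>\<^bsub>R\<^esub> \<odot>\<^bsub>M\<^esub> g) G = finsum M (\<lambda>g. \<zero>\<^bsub>M\<^esub>) G"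
    by (rule M.finsum_cong') (use G lm_zero_smult[OF lm] in auto)
  also have "\<dots> = \<zero>\<^bsub>M\<^esub>" by simp
  finally show ?thesis unfolding Dspan_def by force
qed

lemma span_gen: assumes G: "finite G" "G \<subseteq> carrier M" and g0: "g0 \<in> G"
  shows "g0 \<in> Dspan M (carrier R) G"
proof -
  let ?c = "\<lambda>g. if g0 = g then \<one>\<^bsub>R\<^esub> else \<zero>\<^bsub>R\<^esub>"
  have "finsum M (\<lambda>g. ?c g \<odot>\<^bsub>M\<^esub> g) G = finsum M (\<lambda>g. if g0 = g then (\<lambda>x. x) g else \<zero>\<^bsub>M\<^esub>) G"
    by (rule M.finsum_cong') (use G lm_zero_smult[OF lm] lm_one[OF lm] in auto)
  also have "\<dots> = g0" by (rule M.finsum_singleton[OF g0 G(1)]) (use G in auto)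
  finally have "g0 = finsum M (\<lambda>g. ?c g \<odot>\<^bsub>M\<^esub> g) G" by simp
  moreover have "?c \<in> G \<rightarrow> carrier R" by auto
  ultimately show ?thesis unfolding Dspan_def
    by (intro CollectI exI[of _ ?c]) simp
qed

lemma span_finsum: assumes G: "finite G" "G \<subseteq> carrier M" and A: "finite A"
  and f: "f \<in> A \<rightarrow> Dspan M (carrier R) G"
  shows "finsum M f A \<in> Dspan M (carrier R) G"
  using A f
proof (induction A rule: finite_induct)
  case empty
  then show ?case using span_zero[OF G] by simp
next
  case (insert a F)
  have sub: "Dspan M (carrier R) G \<subseteq> carrier M" by (rule span_sub[OF G(2)]) simp
  have fF: "f \<in> F \<rightarrow> carrier M" "f a \<in> carrier M" using insert.prems sub by auto
  have "finsum M f (insert a F) = f a \<oplus>\<^bsub>M\<^esub> finsum M f F"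
    using M.finsum_insert[OF insert.hyps(1,2) fF] .
  moreover have "f a \<in> Dspan M (carrier R) G" using insert.prems by auto
  moreover have "finsum M f F \<in> Dspan M (carrier R) G" using insert.IH insert.prems by auto
  ultimately show ?case using span_add[OF G] by simp
qed

end



context
  fixes R :: "('r,'b) ring_scheme" and M :: "('r,'m,'c) module_scheme"
  assumes lm: "lmodule R M"
  fixes H assumes sub: "lsubmodule R M H"
begin

interpretation R: ring R by (rule lm_ring[OF lm])
interpretation H: abelian_subgroup H M by (rule sub_asg[OF lm sub])
interpretation Q: abelian_group "qmod M H" by (rule q_ag[OF lm sub])

lemma pi_finsum: assumes A: "finite A" and f: "f \<in> A \<rightarrow> carrier M"
  shows "H +>\<^bsub>M\<^esub> finsum M f A = finsum (qmod M H) (\<lambda>a. H +>\<^bsub>M\<^esub> f a) A"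
  using A f
proof (induction A rule: finite_induct)
  case empty
  then show ?case using q_zero[OF lm sub] by simp
next
  case (insert a F)
  have fF: "f \<in> F \<rightarrow> carrier M" "f a \<in> carrier M" using insert.prems by auto
  have gF: "(\<lambda>a. H +>\<^bsub>M\<^esub> f a) \<in> F \<rightarrow> carrier (qmod M H)" "H +>\<^bsub>M\<^esub> f a \<in> carrier (qmod M H)"
    using fF cos_in[OF lm sub] by auto
  have "H +>\<^bsub>M\<^esub> finsum M f (insert a F) = H +>\<^bsub>M\<^esub> (f a \<oplus>\<^bsub>M\<^esub> finsum M f F)"
    using H.finsum_insert[OF insert.hyps(1,2) fF] by simp
  also have "\<dots> = (H +>\<^bsub>M\<^esub> f a) \<oplus>\<^bsub>qmod M H\<^esub> (H +>\<^bsub>M\<^esub> finsum M f F)"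
    using q_add[OF lm sub fF(2) H.finsum_closed[OF fF(1)]] by simp
  also have "\<dots> = (H +>\<^bsub>M\<^esub> f a) \<oplus>\<^bsub>qmod M H\<^esub> finsum (qmod M H) (\<lambda>a. H +>\<^bsub>M\<^esub> f a) F"
    using insert.IH[OF fF(1)] by simp
  also have "\<dots> = finsum (qmod M H) (\<lambda>a. H +>\<^bsub>M\<^esub> f a) (insert a F)"
    using Q.finsum_insert[OF insert.hyps(1,2) gF] by simp
  finally show ?case .
qed

lemma q_fg: assumes fg: "lfin_gen R M" shows "lfin_gen R (qmod M H)"
proof -
  obtain F where F: "finite F" "F \<subseteq> carrier M"
    and cF: "carrier M = {finsum M (\<lambda>f. c f \<odot>\<^bsub>M\<^esub> f) F | c. c \<in> F \<rightarrow> carrier R}"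
    using fg unfolding lfin_gen_def by blast
  define F' where "F' = (\<lambda>f. H +>\<^bsub>M\<^esub> f) ` F"
  have F': "finite F'" "F' \<subseteq> carrier (qmod M H)" using F cos_in[OF lm sub] unfolding F'_def by auto
  have qlm: "lmodule R (qmod M H)" by (rule q_lm[OF lm sub])
  have "carrier (qmod M H) = Dspan (qmod M H) (carrier R) F'"
  proof
    show "Dspan (qmod M H) (carrier R) F' \<subseteq> carrier (qmod M H)"
      by (rule span_sub[OF qlm F'(2)]) simp
    show "carrier (qmod M H) \<subseteq> Dspan (qmod M H) (carrier R) F'"
    proof
      fix X assume "X \<in> carrier (qmod M H)"
      then obtain x where x: "x \<in> carrier M" "X = H +>\<^bsub>M\<^esub> x" using cos_obtain[OF lm sub] by blast
      then obtain c where c: "c \<in> F \<rightarrow> carrier R" and xc: "x = finsum M (\<lambda>f. c f \<odot>\<^bsub>M\<^esub> f) F"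
        using cF by blast
      have cf: "(\<lambda>f. c f \<odot>\<^bsub>M\<^esub> f) \<in> F \<rightarrow> carrier M" using c F lm_closed[OF lm] by blast
      have "X = finsum (qmod M H) (\<lambda>f. H +>\<^bsub>M\<^esub> (c f \<odot>\<^bsub>M\<^esub> f)) F"
        using x xc pi_finsum[OF F(1) cf] by simp
      also have "\<dots> \<in> Dspan (qmod M H) (carrier R) F'"
      proof (rule span_finsum[OF qlm F' F(1)])
        show "(\<lambda>f. H +>\<^bsub>M\<^esub> (c f \<odot>\<^bsub>M\<^esub> f)) \<in> F \<rightarrow> Dspan (qmod M H) (carrier R) F'"
        proof
          fix f assume f: "f \<in> F"
          have cf1: "c f \<in> carrier R" "f \<in> carrier M" using f c F by auto
          have "H +>\<^bsub>M\<^esub> f \<in> Dspan (qmod M H) (carrier R) F'"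
            by (rule span_gen[OF qlm F']) (use f F'_def in auto)
          then have "c f \<odot>\<^bsub>qmod M H\<^esub> (H +>\<^bsub>M\<^esub> f) \<in> Dspan (qmod M H) (carrier R) F'"
            by (rule span_smult[OF qlm F' cf1(1)])
          then show "H +>\<^bsub>M\<^esub> (c f \<odot>\<^bsub>M\<^esub> f) \<in> Dspan (qmod M H) (carrier R) F'"
            using q_smult[OF lm sub cf1] by simp
        qed
      qed
      finally show "X \<in> Dspan (qmod M H) (carrier R) F'" .
    qed
  qed
  then show ?thesis unfolding lfin_gen_def Dspan_def using F' by blast
qed

lemma q_enc: assumes fg: "lfin_gen R M"
  shows "\<exists>\<phi> :: 'm set \<Rightarrow> 'r list. inj_on \<phi> (carrier (qmod M H))"
proof -
  obtain F where F: "finite F" "F \<subseteq> carrier M"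
    and cF: "carrier M = {finsum M (\<lambda>f. c f \<odot>\<^bsub>M\<^esub> f) F | c. c \<in> F \<rightarrow> carrier R}"
    using fg unfolding lfin_gen_def by blast
  obtain fs where fs: "set fs = F" using finite_list[OF F(1)] by blast
  define P where "P = (\<lambda>X c. c \<in> F \<rightarrow> carrier R \<and> X = H +>\<^bsub>M\<^esub> finsum M (\<lambda>f. c f \<odot>\<^bsub>M\<^esub> f) F)"
  define \<phi> where "\<phi> = (\<lambda>X. map (SOME c. P X c) fs)"
  have ex: "\<exists>c. P X c" if XX: "X \<in> carrier (qmod M H)" for X
  proof -
    obtain x where x: "x \<in> carrier M" "X = H +>\<^bsub>M\<^esub> x" using cos_obtain[OF lm sub XX] by blast
    then obtain c where c: "c \<in> F \<rightarrow> carrier R" and xc: "x = finsum M (\<lambda>f. c f \<odot>\<^bsub>M\<^esub> f) F"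
      using cF by blast
    then show ?thesis unfolding P_def using x by blast
  qed
  have "inj_on \<phi> (carrier (qmod M H))"
  proof (rule inj_onI)
    fix X Y assume X: "X \<in> carrier (qmod M H)" and Y: "Y \<in> carrier (qmod M H)" and e: "\<phi> X = \<phi> Y"
    define cx where "cx = (SOME c. P X c)"
    define cy where "cy = (SOME c. P Y c)"
    have px: "P X cx" unfolding cx_def using ex[OF X] by (rule someI_ex)
    have py: "P Y cy" unfolding cy_def using ex[OF Y] by (rule someI_ex)
    have "map cx fs = map cy fs" using e unfolding \<phi>_def cx_def cy_def .
    then have eq: "\<And>f. f \<in> F \<Longrightarrow> cx f = cy f" using fs by (simp add: map_eq_conv)
    have "finsum M (\<lambda>f. cx f \<odot>\<^bsub>M\<^esub> f) F = finsum M (\<lambda>f. cy f \<odot>\<^bsub>M\<^esub> f) F"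
    proof (rule H.finsum_cong')
      show "(\<lambda>f. cy f \<odot>\<^bsub>M\<^esub> f) \<in> F \<rightarrow> carrier M" using py F lm_closed[OF lm] unfolding P_def by blast
    qed (use eq in auto)
    then show "X = Y" using px py unfolding P_def by simp
  qed
  then show ?thesis by blast
qed

end


definition tr :: "('r,'a) module \<Rightarrow> ('a \<Rightarrow> 'x) \<Rightarrow> ('r,'x) module" where
  "tr Q \<phi> = \<lparr>carrier = \<phi> ` carrier Q, mult = (\<lambda>x y. undefined), one = undefined,
     zero = \<phi> \<zero>\<^bsub>Q\<^esub>,
     add = (\<lambda>x y. \<phi> (inv_into (carrier Q) \<phi> x \<oplus>\<^bsub>Q\<^esub> inv_into (carrier Q) \<phi> y)),
     smult = (\<lambda>r x. \<phi> (r \<odot>\<^bsub>Q\<^esub> inv_into (carrier Q) \<phi> x))\<rparr>"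

context
  fixes R :: "('r,'b) ring_scheme" and Q :: "('r,'a) module" and \<phi> :: "'a \<Rightarrow> 'x"
  assumes lmQ: "lmodule R Q" and inj: "inj_on \<phi> (carrier Q)"
begin

interpretation R: ring R by (rule lm_ring[OF lmQ])
interpretation Q: abelian_group Q by (rule lm_ag[OF lmQ])

lemma tr_carrier: "carrier (tr Q \<phi>) = \<phi> ` carrier Q" by (simp add: tr_def)
lemma tr_zero: "\<zero>\<^bsub>tr Q \<phi>\<^esub> = \<phi> \<zero>\<^bsub>Q\<^esub>" by (simp add: tr_def)
lemma tr_add: "x \<in> carrier Q \<Longrightarrow> y \<in> carrier Q \<Longrightarrow> \<phi> x \<oplus>\<^bsub>tr Q \<phi>\<^esub> \<phi> y = \<phi> (x \<oplus>\<^bsub>Q\<^esub> y)"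
  by (simp add: tr_def inv_into_f_f[OF inj])
lemma tr_smult: "x \<in> carrier Q \<Longrightarrow> r \<odot>\<^bsub>tr Q \<phi>\<^esub> \<phi> x = \<phi> (r \<odot>\<^bsub>Q\<^esub> x)"
  by (simp add: tr_def inv_into_f_f[OF inj])

lemma tr_obtain: "X \<in> carrier (tr Q \<phi>) \<Longrightarrow> \<exists>x\<in>carrier Q. X = \<phi> x"
  by (auto simp: tr_carrier)

lemma tr_ag: "abelian_group (tr Q \<phi>)"
proof (rule abelian_groupI)
  fix X Y assume "X \<in> carrier (tr Q \<phi>)" "Y \<in> carrier (tr Q \<phi>)"
  then obtain x y where xy: "x \<in> carrier Q" "y \<in> carrier Q" "X = \<phi> x" "Y = \<phi> y"
    using tr_obtain by metis
  show "X \<oplus>\<^bsub>tr Q \<phi>\<^esub> Y \<in> carrier (tr Q \<phi>)" using xy tr_add by (simp add: tr_carrier)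
  show "X \<oplus>\<^bsub>tr Q \<phi>\<^esub> Y = Y \<oplus>\<^bsub>tr Q \<phi>\<^esub> X" using xy tr_add Q.a_comm by simp
next
  show "\<zero>\<^bsub>tr Q \<phi>\<^esub> \<in> carrier (tr Q \<phi>)" by (simp add: tr_carrier tr_zero)
next
  fix X Y Z assume "X \<in> carrier (tr Q \<phi>)" "Y \<in> carrier (tr Q \<phi>)" "Z \<in> carrier (tr Q \<phi>)"
  then obtain x y z where xy: "x \<in> carrier Q" "y \<in> carrier Q" "z \<in> carrier Q" "X = \<phi> x" "Y = \<phi> y" "Z = \<phi> z"
    using tr_obtain by metis
  show "X \<oplus>\<^bsub>tr Q \<phi>\<^esub> Y \<oplus>\<^bsub>tr Q \<phi>\<^esub> Z = X \<oplus>\<^bsub>tr Q \<phi>\<^esub> (Y \<oplus>\<^bsub>tr Q \<phi>\<^esub> Z)"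
    using xy tr_add Q.a_assoc by simp
next
  fix X assume "X \<in> carrier (tr Q \<phi>)"
  then obtain x where x: "x \<in> carrier Q" "X = \<phi> x" using tr_obtain by metis
  show "\<zero>\<^bsub>tr Q \<phi>\<^esub> \<oplus>\<^bsub>tr Q \<phi>\<^esub> X = X" using x tr_add tr_zero by simp
  have "\<phi> (\<ominus>\<^bsub>Q\<^esub> x) \<oplus>\<^bsub>tr Q \<phi>\<^esub> X = \<zero>\<^bsub>tr Q \<phi>\<^esub>" using x tr_add tr_zero Q.l_neg by simp
  moreover have "\<phi> (\<ominus>\<^bsub>Q\<^esub> x) \<in> carrier (tr Q \<phi>)" using x by (simp add: tr_carrier)
  ultimately show "\<exists>y\<in>carrier (tr Q \<phi>). y \<oplus>\<^bsub>tr Q \<phi>\<^esub> X = \<zero>\<^bsub>tr Q \<phi>\<^esub>" by blast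
qed

interpretation T: abelian_group "tr Q \<phi>" by (rule tr_ag)

lemma tr_closed: "a \<in> carrier R \<Longrightarrow> X \<in> carrier (tr Q \<phi>) \<Longrightarrow> a \<odot>\<^bsub>tr Q \<phi>\<^esub> X \<in> carrier (tr Q \<phi>)"
proof -
  assume a: "a \<in> carrier R" and XX: "X \<in> carrier (tr Q \<phi>)"
  obtain x where x: "x \<in> carrier Q" "X = \<phi> x" using tr_obtain[OF XX] by metis
  show ?thesis using x a tr_smult lm_closed[OF lmQ] by (simp add: tr_carrier)
qed

lemma tr_one: "X \<in> carrier (tr Q \<phi>) \<Longrightarrow> \<one>\<^bsub>R\<^esub> \<odot>\<^bsub>tr Q \<phi>\<^esub> X = X"
proof -
  assume XX: "X \<in> carrier (tr Q \<phi>)"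
  obtain x where x: "x \<in> carrier Q" "X = \<phi> x" using tr_obtain[OF XX] by metis
  then show ?thesis using tr_smult lm_one[OF lmQ] by simp
qed

lemma tr_distr1: "a \<in> carrier R \<Longrightarrow> b \<in> carrier R \<Longrightarrow> X \<in> carrier (tr Q \<phi>) \<Longrightarrow>
  (a \<oplus>\<^bsub>R\<^esub> b) \<odot>\<^bsub>tr Q \<phi>\<^esub> X = a \<odot>\<^bsub>tr Q \<phi>\<^esub> X \<oplus>\<^bsub>tr Q \<phi>\<^esub> b \<odot>\<^bsub>tr Q \<phi>\<^esub> X"
proof -
  assume ab: "a \<in> carrier R" "b \<in> carrier R" and XX: "X \<in> carrier (tr Q \<phi>)"
  obtain x where x: "x \<in> carrier Q" "X = \<phi> x" using tr_obtain[OF XX] by metis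
  show ?thesis using x ab tr_smult tr_add lm_closed[OF lmQ] lm_distr1[OF lmQ] by simp
qed

lemma tr_assoc: "a \<in> carrier R \<Longrightarrow> b \<in> carrier R \<Longrightarrow> X \<in> carrier (tr Q \<phi>) \<Longrightarrow>
  (a \<otimes>\<^bsub>R\<^esub> b) \<odot>\<^bsub>tr Q \<phi>\<^esub> X = a \<odot>\<^bsub>tr Q \<phi>\<^esub> (b \<odot>\<^bsub>tr Q \<phi>\<^esub> X)"
proof -
  assume ab: "a \<in> carrier R" "b \<in> carrier R" and XX: "X \<in> carrier (tr Q \<phi>)"
  obtain x where x: "x \<in> carrier Q" "X = \<phi> x" using tr_obtain[OF XX] by metis
  show ?thesis using x ab tr_smult lm_closed[OF lmQ] lm_assoc[OF lmQ] by simp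
qed

lemma tr_distr2: "a \<in> carrier R \<Longrightarrow> X \<in> carrier (tr Q \<phi>) \<Longrightarrow> Y \<in> carrier (tr Q \<phi>) \<Longrightarrow>
  a \<odot>\<^bsub>tr Q \<phi>\<^esub> (X \<oplus>\<^bsub>tr Q \<phi>\<^esub> Y) = a \<odot>\<^bsub>tr Q \<phi>\<^esub> X \<oplus>\<^bsub>tr Q \<phi>\<^esub> a \<odot>\<^bsub>tr Q \<phi>\<^esub> Y"
proof -
  assume a: "a \<in> carrier R" and XX: "X \<in> carrier (tr Q \<phi>)" "Y \<in> carrier (tr Q \<phi>)"
  obtain x y where xy: "x \<in> carrier Q" "y \<in> carrier Q" "X = \<phi> x" "Y = \<phi> y"
    using tr_obtain[OF XX(1)] tr_obtain[OF XX(2)] by metis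
  show ?thesis using xy a tr_smult tr_add lm_closed[OF lmQ] lm_distr2[OF lmQ] by simp
qed

lemma tr_lm: "lmodule R (tr Q \<phi>)"
  unfolding lmodule_def
  apply (intro conjI ballI lm_ring[OF lmQ] tr_ag)
  apply (erule (1) tr_closed)
  apply (erule (2) tr_distr1)
  apply (erule (2) tr_distr2)
  apply (erule (2) tr_assoc)
  apply (erule tr_one)
  done

lemma tr_finsum: assumes A: "finite A" and f: "f \<in> A \<rightarrow> carrier Q"
  shows "finsum (tr Q \<phi>) (\<lambda>a. \<phi> (f a)) A = \<phi> (finsum Q f A)"
  using A f
proof (induction A rule: finite_induct)
  case empty
  then show ?case by (simp add: tr_zero)
next
  case (insert a F)
  have fF: "f \<in> F \<rightarrow> carrier Q" "f a \<in> carrier Q" using insert.prems by auto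
  have gF: "(\<lambda>a. \<phi> (f a)) \<in> F \<rightarrow> carrier (tr Q \<phi>)" "\<phi> (f a) \<in> carrier (tr Q \<phi>)"
    using fF by (auto simp: tr_carrier)
  have "finsum (tr Q \<phi>) (\<lambda>a. \<phi> (f a)) (insert a F) = \<phi> (f a) \<oplus>\<^bsub>tr Q \<phi>\<^esub> finsum (tr Q \<phi>) (\<lambda>a. \<phi> (f a)) F"
    using T.finsum_insert[OF insert.hyps(1,2) gF] by simp
  also have "\<dots> = \<phi> (f a) \<oplus>\<^bsub>tr Q \<phi>\<^esub> \<phi> (finsum Q f F)" using insert.IH[OF fF(1)] by simp
  also have "\<dots> = \<phi> (f a \<oplus>\<^bsub>Q\<^esub> finsum Q f F)" using tr_add[OF fF(2) Q.finsum_closed[OF fF(1)]] .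
  also have "\<dots> = \<phi> (finsum Q f (insert a F))" using Q.finsum_insert[OF insert.hyps(1,2) fF] by simp
  finally show ?case .
qed

lemma tr_Dspan: assumes G: "finite G" "G \<subseteq> carrier Q" and C: "C \<subseteq> carrier R"
  shows "Dspan (tr Q \<phi>) C (\<phi> ` G) = \<phi> ` Dspan Q C G"
proof -
  have injG: "inj_on \<phi> G" using inj G(2) inj_on_subset by blast
  have key: "finsum (tr Q \<phi>) (\<lambda>g'. c' g' \<odot>\<^bsub>tr Q \<phi>\<^esub> g') (\<phi> ` G)
      = \<phi> (finsum Q (\<lambda>g. c' (\<phi> g) \<odot>\<^bsub>Q\<^esub> g) G)" if c': "c' \<in> \<phi> ` G \<rightarrow> C" for c'
  proof -
    have cg: "c' (\<phi> g) \<in> carrier R" "g \<in> carrier Q" if "g \<in> G" for g using c' C G that by auto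
    have m1: "(\<lambda>g'. c' g' \<odot>\<^bsub>tr Q \<phi>\<^esub> g') \<in> \<phi> ` G \<rightarrow> carrier (tr Q \<phi>)"
    proof
      fix g' assume "g' \<in> \<phi> ` G"
      then obtain g where g: "g \<in> G" "g' = \<phi> g" by blast
      then show "c' g' \<odot>\<^bsub>tr Q \<phi>\<^esub> g' \<in> carrier (tr Q \<phi>)"
        using cg[OF g(1)] tr_closed by (simp add: tr_carrier)
    qed
    have "finsum (tr Q \<phi>) (\<lambda>g'. c' g' \<odot>\<^bsub>tr Q \<phi>\<^esub> g') (\<phi> ` G)
        = finsum (tr Q \<phi>) (\<lambda>g. c' (\<phi> g) \<odot>\<^bsub>tr Q \<phi>\<^esub> \<phi> g) G"
      by (rule T.finsum_reindex[OF m1 injG])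
    also have "\<dots> = finsum (tr Q \<phi>) (\<lambda>g. \<phi> (c' (\<phi> g) \<odot>\<^bsub>Q\<^esub> g)) G"
    proof (rule T.finsum_cong')
      show "(\<lambda>g. \<phi> (c' (\<phi> g) \<odot>\<^bsub>Q\<^esub> g)) \<in> G \<rightarrow> carrier (tr Q \<phi>)"
        using cg lm_closed[OF lmQ] by (auto simp: tr_carrier)
    qed (use cg tr_smult in auto)
    also have "\<dots> = \<phi> (finsum Q (\<lambda>g. c' (\<phi> g) \<odot>\<^bsub>Q\<^esub> g) G)"
      by (rule tr_finsum[OF G(1)]) (use cg lm_closed[OF lmQ] in auto)
    finally show ?thesis .
  qed
  show ?thesis
  proof
    show "Dspan (tr Q \<phi>) C (\<phi> ` G) \<subseteq> \<phi> ` Dspan Q C G"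
    proof
      fix v assume "v \<in> Dspan (tr Q \<phi>) C (\<phi> ` G)"
      then obtain c' where c': "c' \<in> \<phi> ` G \<rightarrow> C"
        and v: "v = finsum (tr Q \<phi>) (\<lambda>g'. c' g' \<odot>\<^bsub>tr Q \<phi>\<^esub> g') (\<phi> ` G)"
        unfolding Dspan_def by blast
      have "(\<lambda>g. c' (\<phi> g)) \<in> G \<rightarrow> C" using c' by auto
      then have "finsum Q (\<lambda>g. c' (\<phi> g) \<odot>\<^bsub>Q\<^esub> g) G \<in> Dspan Q C G"
        unfolding Dspan_def by (intro CollectI exI[of _ "\<lambda>g. c' (\<phi> g)"]) simp
      then show "v \<in> \<phi> ` Dspan Q C G" using v key[OF c'] by blast
    qed
    show "\<phi> ` Dspan Q C G \<subseteq> Dspan (tr Q \<phi>) C (\<phi> ` G)"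
    proof
      fix v assume "v \<in> \<phi> ` Dspan Q C G"
      then obtain c where c: "c \<in> G \<rightarrow> C" and v: "v = \<phi> (finsum Q (\<lambda>g. c g \<odot>\<^bsub>Q\<^esub> g) G)"
        unfolding Dspan_def by blast
      define c' where "c' = (\<lambda>g'. c (inv_into G \<phi> g'))"
      have cc: "c' (\<phi> g) = c g" if "g \<in> G" for g
        unfolding c'_def using inv_into_f_f[OF injG that] by simp
      have c'C: "c' \<in> \<phi> ` G \<rightarrow> C" using c cc by auto
      have "finsum Q (\<lambda>g. c' (\<phi> g) \<odot>\<^bsub>Q\<^esub> g) G = finsum Q (\<lambda>g. c g \<odot>\<^bsub>Q\<^esub> g) G"
      proof (rule Q.finsum_cong')
        show "(\<lambda>g. c g \<odot>\<^bsub>Q\<^esub> g) \<in> G \<rightarrow> carrier Q" using c C G lm_closed[OF lmQ] by blast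
      qed (use cc in auto)
      then have "v = finsum (tr Q \<phi>) (\<lambda>g'. c' g' \<odot>\<^bsub>tr Q \<phi>\<^esub> g') (\<phi> ` G)"
        using v key[OF c'C] by simp
      then show "v \<in> Dspan (tr Q \<phi>) C (\<phi> ` G)" unfolding Dspan_def
        using c'C by (intro CollectI exI[of _ c']) simp
    qed
  qed
qed

lemma tr_Ddim: assumes S: "S \<subseteq> carrier Q" and C: "C \<subseteq> carrier R"
  shows "Ddim (tr Q \<phi>) C (\<phi> ` S) = Ddim Q C S"
proof -
  have "(\<exists>G'. finite G' \<and> G' \<subseteq> \<phi> ` S \<and> card G' = k \<and> \<phi> ` S \<subseteq> Dspan (tr Q \<phi>) C G')
     \<longleftrightarrow> (\<exists>G. finite G \<and> G \<subseteq> S \<and> card G = k \<and> S \<subseteq> Dspan Q C G)" for k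
  proof
    assume "\<exists>G'. finite G' \<and> G' \<subseteq> \<phi> ` S \<and> card G' = k \<and> \<phi> ` S \<subseteq> Dspan (tr Q \<phi>) C G'"
    then obtain G' where G': "finite G'" "G' \<subseteq> \<phi> ` S" "card G' = k" "\<phi> ` S \<subseteq> Dspan (tr Q \<phi>) C G'"
      by blast
    obtain G where G: "G \<subseteq> S" "G' = \<phi> ` G" using G'(2) subset_image_iff by metis
    have injG: "inj_on \<phi> G" using inj G S inj_on_subset by blast
    have fG: "finite G" using G'(1) G(2) finite_image_iff[OF injG] by simp
    have cG: "card G = k" using G'(3) G(2) card_image[OF injG] by simp
    have GQ: "G \<subseteq> carrier Q" using G S by auto
    have sp: "\<phi> ` S \<subseteq> \<phi> ` Dspan Q C G" using G'(4) G(2) tr_Dspan[OF fG GQ C] by simp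
    have spQ: "Dspan Q C G \<subseteq> carrier Q" by (rule span_sub[OF lmQ GQ C])
    have "S \<subseteq> Dspan Q C G"
    proof
      fix s assume s: "s \<in> S"
      then have "\<phi> s \<in> \<phi> ` Dspan Q C G" using sp by blast
      then obtain t where t: "t \<in> Dspan Q C G" "\<phi> s = \<phi> t" by blast
      have "s = t" using inj_onD[OF inj t(2)] s S t(1) spQ by blast
      then show "s \<in> Dspan Q C G" using t by simp
    qed
    then show "\<exists>G. finite G \<and> G \<subseteq> S \<and> card G = k \<and> S \<subseteq> Dspan Q C G" using fG G cG by blast
  next
    assume "\<exists>G. finite G \<and> G \<subseteq> S \<and> card G = k \<and> S \<subseteq> Dspan Q C G"
    then obtain G where G: "finite G" "G \<subseteq> S" "card G = k" "S \<subseteq> Dspan Q C G" by blast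
    have injG: "inj_on \<phi> G" using inj G S inj_on_subset by blast
    have GQ: "G \<subseteq> carrier Q" using G S by auto
    have "\<phi> ` S \<subseteq> Dspan (tr Q \<phi>) C (\<phi> ` G)" using G(4) tr_Dspan[OF G(1) GQ C] by auto
    moreover have "card (\<phi> ` G) = k" using G(3) card_image[OF injG] by simp
    ultimately show "\<exists>G'. finite G' \<and> G' \<subseteq> \<phi> ` S \<and> card G' = k \<and> \<phi> ` S \<subseteq> Dspan (tr Q \<phi>) C G'"
      using G(1,2) by blast
  qed
  then show ?thesis unfolding Ddim_def by simp
qed

lemma tr_Vset: assumes FQ: "F \<subseteq> carrier Q" shows "Vset (tr Q \<phi>) n u k (\<phi> ` F) = \<phi> ` Vset Q n u k F"
proof
  show "Vset (tr Q \<phi>) n u k (\<phi> ` F) \<subseteq> \<phi> ` Vset Q n u k F"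
  proof
    fix v assume "v \<in> Vset (tr Q \<phi>) n u k (\<phi> ` F)"
    then obtain a f where a: "a \<in> Zball n k" and f: "f \<in> F" and v: "v = u a \<odot>\<^bsub>tr Q \<phi>\<^esub> \<phi> f"
      unfolding Vset_def by blast
    have "v = \<phi> (u a \<odot>\<^bsub>Q\<^esub> f)" using v tr_smult f FQ by auto
    moreover have "u a \<odot>\<^bsub>Q\<^esub> f \<in> Vset Q n u k F" unfolding Vset_def using a f by blast
    ultimately show "v \<in> \<phi> ` Vset Q n u k F" by blast
  qed
  show "\<phi> ` Vset Q n u k F \<subseteq> Vset (tr Q \<phi>) n u k (\<phi> ` F)"
  proof
    fix v assume "v \<in> \<phi> ` Vset Q n u k F"
    then obtain a f where a: "a \<in> Zball n k" and f: "f \<in> F" and v: "v = \<phi> (u a \<odot>\<^bsub>Q\<^esub> f)"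
      unfolding Vset_def by blast
    have "v = u a \<odot>\<^bsub>tr Q \<phi>\<^esub> \<phi> f" using v tr_smult f FQ by auto
    moreover have "\<phi> f \<in> \<phi> ` F" using f by blast
    ultimately show "v \<in> Vset (tr Q \<phi>) n u k (\<phi> ` F)" unfolding Vset_def using a by blast
  qed
qed

lemma tr_gk: assumes C: "C \<subseteq> carrier R" and u: "\<forall>a\<in>Zn n. u a \<in> carrier R"
  shows "gk C n u (tr Q \<phi>) = gk C n u Q"
proof -
  define I where "I = {F. finite F \<and> F \<noteq> {} \<and> F \<subseteq> carrier Q - {\<zero>\<^bsub>Q\<^esub>}}"
  have Iset: "{F. finite F \<and> F \<noteq> {} \<and> F \<subseteq> carrier (tr Q \<phi>) - {\<zero>\<^bsub>tr Q \<phi>\<^esub>}} = (\<lambda>F. \<phi> ` F) ` I"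
  proof
    show "{F. finite F \<and> F \<noteq> {} \<and> F \<subseteq> carrier (tr Q \<phi>) - {\<zero>\<^bsub>tr Q \<phi>\<^esub>}} \<subseteq> (\<lambda>F. \<phi> ` F) ` I"
    proof
      fix F' assume "F' \<in> {F. finite F \<and> F \<noteq> {} \<and> F \<subseteq> carrier (tr Q \<phi>) - {\<zero>\<^bsub>tr Q \<phi>\<^esub>}}"
      then have F': "finite F'" "F' \<noteq> {}" "F' \<subseteq> \<phi> ` carrier Q" "\<phi> \<zero>\<^bsub>Q\<^esub> \<notin> F'"
        by (auto simp: tr_carrier tr_zero)
      obtain F where F: "F \<subseteq> carrier Q" "F' = \<phi> ` F" using F'(3) subset_image_iff by metis
      have injF: "inj_on \<phi> F" using inj F inj_on_subset by blast
      have "finite F" using F'(1) F(2) finite_image_iff[OF injF] by simp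
      moreover have "F \<noteq> {}" using F'(2) F(2) by auto
      moreover have "\<zero>\<^bsub>Q\<^esub> \<notin> F" using F'(4) F(2) by auto
      ultimately have "F \<in> I" unfolding I_def using F(1) by auto
      then show "F' \<in> (\<lambda>F. \<phi> ` F) ` I" using F(2) by blast
    qed
    show "(\<lambda>F. \<phi> ` F) ` I \<subseteq> {F. finite F \<and> F \<noteq> {} \<and> F \<subseteq> carrier (tr Q \<phi>) - {\<zero>\<^bsub>tr Q \<phi>\<^esub>}}"
    proof
      fix F' assume "F' \<in> (\<lambda>F. \<phi> ` F) ` I"
      then obtain F where F: "F \<in> I" "F' = \<phi> ` F" by blast
      have FF: "finite F" "F \<noteq> {}" "F \<subseteq> carrier Q" "\<zero>\<^bsub>Q\<^esub> \<notin> F" using F(1) unfolding I_def by auto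
      have z: "\<phi> \<zero>\<^bsub>Q\<^esub> \<notin> \<phi> ` F" using inj_on_image_mem_iff[OF inj Q.zero_closed FF(3)] FF(4) by simp
      have "F' \<subseteq> carrier (tr Q \<phi>) - {\<zero>\<^bsub>tr Q \<phi>\<^esub>}"
        unfolding tr_carrier tr_zero using FF(3) F(2) z by blast
      then show "F' \<in> {F. finite F \<and> F \<noteq> {} \<and> F \<subseteq> carrier (tr Q \<phi>) - {\<zero>\<^bsub>tr Q \<phi>\<^esub>}}"
        using FF F(2) by simp
    qed
  qed
  have VQ: "Vset Q n u k F \<subseteq> carrier Q" if "F \<in> I" for F k
  proof
    fix v assume "v \<in> Vset Q n u k F"
    then obtain a f where a: "a \<in> Zball n k" and f: "f \<in> F" and v: "v = u a \<odot>\<^bsub>Q\<^esub> f"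
      unfolding Vset_def by blast
    have "u a \<in> carrier R" using u a unfolding Zball_def by auto
    moreover have "f \<in> carrier Q" using f that unfolding I_def by auto
    ultimately show "v \<in> carrier Q" using v lm_closed[OF lmQ] by simp
  qed
  have pt: "Ddim (tr Q \<phi>) C (Vset (tr Q \<phi>) n u k (\<phi> ` F)) = Ddim Q C (Vset Q n u k F)" if "F \<in> I" for F k
  proof -
    have "F \<subseteq> carrier Q" using that unfolding I_def by auto
    then show ?thesis using tr_Vset tr_Ddim[OF VQ[OF that] C] by simp
  qed
  have "gk C n u (tr Q \<phi>) = (SUP F \<in> (\<lambda>F. \<phi> ` F) ` I.
      limsup (\<lambda>k. ereal (ln (real (Ddim (tr Q \<phi>) C (Vset (tr Q \<phi>) n u k F))) / ln (real k))))"
    unfolding gk_def Iset ..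
  also have "\<dots> = (SUP F \<in> I.
      limsup (\<lambda>k. ereal (ln (real (Ddim (tr Q \<phi>) C (Vset (tr Q \<phi>) n u k (\<phi> ` F)))) / ln (real k))))"
    by (simp add: image_comp)
  also have "\<dots> = (SUP F \<in> I. limsup (\<lambda>k. ereal (ln (real (Ddim Q C (Vset Q n u k F))) / ln (real k))))"
    by (rule SUP_cong) (simp_all add: pt)
  also have "\<dots> = gk C n u Q" unfolding gk_def I_def ..
  finally show ?thesis .
qed

lemma tr_fg: assumes fg: "lfin_gen R Q" shows "lfin_gen R (tr Q \<phi>)"
proof -
  obtain F where F: "finite F" "F \<subseteq> carrier Q" and cF: "carrier Q = Dspan Q (carrier R) F"
    using fg unfolding lfin_gen_def Dspan_def by blast
  have "carrier (tr Q \<phi>) = Dspan (tr Q \<phi>) (carrier R) (\<phi> ` F)"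
    using tr_Dspan[OF F, of "carrier R"] cF by (simp add: tr_carrier)
  moreover have "finite (\<phi> ` F)" "\<phi> ` F \<subseteq> carrier (tr Q \<phi>)" using F by (auto simp: tr_carrier)
  ultimately show ?thesis unfolding lfin_gen_def Dspan_def by blast
qed

end


theorem proposition3p8:
  fixes R :: "'r ring" and D :: "'r set" and n :: nat and u :: "(nat \<Rightarrow> int) \<Rightarrow> 'r"
    and N :: "('r, 'm) module"
  assumes "crossed_product R D n u"
    and "lmodule R N" and "lfin_gen R N" and "lcritical R D n u N"
    and "\<forall>L :: ('r, 'r list) module. lmodule R L \<and> lfin_gen R L \<and> carrier L \<noteq> {\<zero>\<^bsub>L\<^esub>}
           \<longrightarrow> gk D n u N \<le> gk D n u L"
  shows "lsimple R N"
proof -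
  note cp = assms(1) and lm = assms(2) and fg = assms(3) and crit = assms(4) and minl = assms(5)
  have ne: "carrier N \<noteq> {\<zero>\<^bsub>N\<^esub>}" using crit unfolding lcritical_def by blast
  have Dsub: "D \<subseteq> carrier R"
  proof -
    have "subring D R" using cp unfolding crossed_product_def division_subring_def by blast
    then show ?thesis using subring.axioms(1) subgroup.subset by fastforce
  qed
  have u: "\<forall>a\<in>Zn n. u a \<in> carrier R" using cp unfolding crossed_product_def by blast
  have "H = {\<zero>\<^bsub>N\<^esub>} \<or> H = carrier N" if sub: "lsubmodule R N H" for H
  proof (rule ccontr)
    assume "\<not> (H = {\<zero>\<^bsub>N\<^esub>} \<or> H = carrier N)"
    then have H0: "H \<noteq> {\<zero>\<^bsub>N\<^esub>}" and H1: "H \<noteq> carrier N" by auto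
    have lt: "gk D n u (qmod N H) < gk D n u N" using crit sub H0 H1 unfolding lcritical_def by blast
    obtain \<phi> :: "'m set \<Rightarrow> 'r list" where inj: "inj_on \<phi> (carrier (qmod N H))"
      using q_enc[OF lm sub fg] by blast
    have qlm: "lmodule R (qmod N H)" by (rule q_lm[OF lm sub])
    define L where "L = tr (qmod N H) \<phi>"
    have Llm: "lmodule R L" unfolding L_def by (rule tr_lm[OF qlm inj])
    have Lfg: "lfin_gen R L" unfolding L_def by (rule tr_fg[OF qlm inj q_fg[OF lm sub fg]])
    have Hsub: "H \<subseteq> carrier N" using sub unfolding lsubmodule_def by blast
    obtain x where x: "x \<in> carrier N" "x \<notin> H" using Hsub H1 by blast
    have zH: "\<zero>\<^bsub>N\<^esub> \<in> H" using sub unfolding lsubmodule_def by blast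
    have xin: "x \<in> H +>\<^bsub>N\<^esub> x"
    proof -
      interpret Nag: abelian_group N by (rule lm_ag[OF lm])
      have "\<zero>\<^bsub>N\<^esub> \<oplus>\<^bsub>N\<^esub> x = x" using x by simp
      then show ?thesis unfolding a_r_coset_def' using zH by (metis UN_I singletonI)
    qed
    have Xc: "H +>\<^bsub>N\<^esub> x \<in> carrier (qmod N H)" by (rule cos_in[OF lm sub x(1)])
    have Hc: "H \<in> carrier (qmod N H)" using q_zero_closed[OF lm sub] q_zero0[OF lm sub] by simp
    have neq: "H +>\<^bsub>N\<^esub> x \<noteq> H" using xin x(2) by blast
    have "\<phi> (H +>\<^bsub>N\<^esub> x) \<noteq> \<phi> H" using inj_onD[OF inj _ Xc Hc] neq by blast
    moreover have "\<phi> (H +>\<^bsub>N\<^esub> x) \<in> carrier L" unfolding L_def tr_carrier[OF qlm inj] using Xc by blast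
    moreover have "\<zero>\<^bsub>L\<^esub> = \<phi> H" unfolding L_def tr_zero[OF qlm inj] q_zero0[OF lm sub] ..
    ultimately have Lne: "carrier L \<noteq> {\<zero>\<^bsub>L\<^esub>}" by auto
    have "gk D n u N \<le> gk D n u L" using minl Llm Lfg Lne by blast
    also have "gk D n u L = gk D n u (qmod N H)" unfolding L_def by (rule tr_gk[OF qlm inj Dsub u])
    finally show False using lt by simp
  qed
  then show ?thesis unfolding lsimple_def using ne by blast
qed


end
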